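(* Let $p'$ be a joint distribution of two binary random variables $(D,E)$ with $p'(E=1)>0$ and $p'(E=0)>0$, and let $M',m'$ be real numbers in the feasible region for $p'$, i.e. $\max_{e\in\{0,1\}} p'(D=1\mid E=e)\le M'\le 1$ and $0\le m'\le \min_{e\in\{0,1\}} p'(D=1\mid E=e)$. Then for every $\delta>0$ there exists a joint distribution $p(D,E,U)$, with $D,E$ binary and $U$ categorical (finitely many values), satisfying positivity (i.e. $p(U=u)>0$ implies $p(E=e\mid U=u)>0$ for both $e\in\{0,1\}$), such that, writing $M=\max_{e,u} p(D=1\mid E=e,U=u)$ and $m=\min_{e,u}p(D=1\mid E=e,U=u)$ (over $e\in\{0,1\}$ and $u$ with $p(U=u)>0$): (i) $|M-M'|<\delta$, $|m-m'|<\delta$, and $|p(D=d,E=e)-p'(D=d,E=e)|<\delta$ for all $d,e\in\{0,1\}$; and (ii) simultaneously, $$\bigl|\,p(D_1=1)-\bigl[p(D=1,E=1)+p(E=0)\,m\bigr]\bigr|<\delta \quad\text{and}\quad \bigl|\,p(D_0=1)-\bigl[p(D=1,E=0)+p(E=1)\,M\bigr]\bigr|<\delta,$$ where $p(D_e=1)=\sum_u p(D=1\mid E=e,U=u)\,p(U=u)$ is the counterfactual probability of the outcome under exposure level $e$.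
   Context: Setting: $E$ (exposure) and $D$ (outcome) are binary, $U$ is an unmeasured categorical confounder, and the causal structure is the graph $U\to E$, $U\to D$, $E\to D$, interpreted as a non-parametric structural equation model with independent errors. $D_e$ denotes the counterfactual outcome when the exposure is set to $E=e$; under this model (counterfactual consistency and $D_e\perp E\mid U$) one has $p(D_e=1)=\sum_u p(D=1\mid E=e,U=u)p(U=u)$. The sensitivity parameters are $M=\max_{e,u}p(D=1\mid E=e,U=u)$ and $m=\min_{e,u}p(D=1\mid E=e,U=u)$. For any such model one has the bounds $p(D=1,E=e)+p(E=1-e)\,m\le p(D_e=1)\le p(D=1,E=e)+p(E=1-e)\,M$; the theorem says the lower bound for $p(D_1=1)$ and the upper bound for $p(D_0=1)$ are simultaneously arbitrarily sharp. *)

theory Defs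
  imports "HOL-Probability.Probability"
begin

(* Observed distribution p'(D,E): a pmf on (D,E) :: bool \<times> bool, True = 1. *)

definition obsE :: "(bool \<times> bool) pmf \<Rightarrow> bool \<Rightarrow> real" where
  "obsE q e = pmf q (True, e) + pmf q (False, e)"

definition obsCond :: "(bool \<times> bool) pmf \<Rightarrow> bool \<Rightarrow> real" where
  "obsCond q e = pmf q (True, e) / obsE q e"

(* Full distribution p(D,E,U) :: (bool \<times> bool \<times> nat) pmf, U categorical (finite support). *)

definition pU :: "(bool \<times> bool \<times> nat) pmf \<Rightarrow> nat \<Rightarrow> real" where
  "pU p u = (\<Sum>d\<in>UNIV. \<Sum>e\<in>UNIV. pmf p (d, e, u))"

definition pEU :: "(bool \<times> bool \<times> nat) pmf \<Rightarrow> bool \<Rightarrow> nat \<Rightarrow> real" where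
  "pEU p e u = pmf p (True, e, u) + pmf p (False, e, u)"

definition suppU :: "(bool \<times> bool \<times> nat) pmf \<Rightarrow> nat set" where
  "suppU p = {u. pU p u > 0}"

definition condDEU :: "(bool \<times> bool \<times> nat) pmf \<Rightarrow> bool \<Rightarrow> nat \<Rightarrow> real" where
  "condDEU p e u = pmf p (True, e, u) / pEU p e u"

definition positivity :: "(bool \<times> bool \<times> nat) pmf \<Rightarrow> bool" where
  "positivity p \<longleftrightarrow> (\<forall>u. pU p u > 0 \<longrightarrow> (\<forall>e. pEU p e u > 0))"

definition Msens :: "(bool \<times> bool \<times> nat) pmf \<Rightarrow> real" where
  "Msens p = Max {condDEU p e u | e u. u \<in> suppU p}"

definition msens :: "(bool \<times> bool \<times> nat) pmf \<Rightarrow> real" where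
  "msens p = Min {condDEU p e u | e u. u \<in> suppU p}"

definition pDE :: "(bool \<times> bool \<times> nat) pmf \<Rightarrow> bool \<Rightarrow> bool \<Rightarrow> real" where
  "pDE p d e = (\<Sum>u\<in>suppU p. pmf p (d, e, u))"

definition pE :: "(bool \<times> bool \<times> nat) pmf \<Rightarrow> bool \<Rightarrow> real" where
  "pE p e = pDE p True e + pDE p False e"

definition pCF :: "(bool \<times> bool \<times> nat) pmf \<Rightarrow> bool \<Rightarrow> real" where
  "pCF p e = (\<Sum>u\<in>suppU p. condDEU p e u * pU p u)"

end

theory Submission
  imports Defs
begin

definition wt :: "real \<Rightarrow> real \<Rightarrow> real \<Rightarrow> bool \<Rightarrow> nat \<Rightarrow> real" where
 "wt a0 a1 eps e u = (if e then (if u=0 then a1*eps else a1*(1-eps)) else (if u=0 then a0*(1-eps) else a0*eps))"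
definition rt :: "real \<Rightarrow> real \<Rightarrow> real \<Rightarrow> real \<Rightarrow> bool \<Rightarrow> nat \<Rightarrow> real" where
 "rt c0 c1 M m e u = (if e then (if u=0 then m else c1) else (if u=0 then c0 else M))"
definition ft where
 "ft a0 a1 eps c0 c1 M m = (\<lambda>(d,e,u). if u \<le> 1 then wt a0 a1 eps e u * (if d then rt c0 c1 M m e u else 1 - rt c0 c1 M m e u) else 0)"

lemma ft_pmf:
  assumes "0 \<le> a0" "0 \<le> a1" "a0 + a1 = 1" "0 \<le> eps" "eps \<le> 1"
   "0 \<le> c0" "c0 \<le> 1" "0 \<le> c1" "c1 \<le> 1" "0 \<le> M" "M \<le> 1" "0 \<le> m" "m \<le> 1"
  shows "pmf (embed_pmf (ft a0 a1 eps c0 c1 M m)) x = ft a0 a1 eps c0 c1 M m x"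
proof (rule pmf_embed_pmf)
  show nn: "0 \<le> ft a0 a1 eps c0 c1 M m y" for y
    using assms by (auto simp: ft_def wt_def rt_def split: prod.splits)
  have "(\<integral>\<^sup>+y. ennreal (ft a0 a1 eps c0 c1 M m y) \<partial>count_space UNIV)
     = (\<Sum>y\<in>UNIV \<times> UNIV \<times> {0,1}. ennreal (ft a0 a1 eps c0 c1 M m y))"
    by (rule nn_integral_count_space') (auto simp: ft_def split: if_splits)
  also have "\<dots> = ennreal (\<Sum>y\<in>UNIV \<times> UNIV \<times> {0,1}. ft a0 a1 eps c0 c1 M m y)"
    using nn by (simp add: sum_ennreal)
  also have "(\<Sum>y\<in>UNIV \<times> UNIV \<times> {0,1}. ft a0 a1 eps c0 c1 M m y) = 1"
    using assms(3) by (simp add: ft_def wt_def rt_def UNIV_bool algebra_simps)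
  finally show "(\<integral>\<^sup>+y. ennreal (ft a0 a1 eps c0 c1 M m y) \<partial>count_space UNIV) = 1" by simp
qed

lemma construct:
  assumes "0 < a0" "0 < a1" "a0 + a1 = 1" "0 < eps" "eps < 1"
   "0 \<le> c0" "c0 \<le> 1" "0 \<le> c1" "c1 \<le> 1" "0 \<le> M" "M \<le> 1" "0 \<le> m" "m \<le> 1"
   "c0 \<le> M" "c1 \<le> M" "m \<le> c0" "m \<le> c1"
  defines "P \<equiv> embed_pmf (ft a0 a1 eps c0 c1 M m)"
  shows "finite (set_pmf P) \<and> positivity P \<and> Msens P = M \<and> msens P = m \<and>
     (\<forall>d e. pDE P d e = ft a0 a1 eps c0 c1 M m (d,e,0) + ft a0 a1 eps c0 c1 M m (d,e,1)) \<and>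
     pCF P True = m * (a0*(1-eps) + a1*eps) + c1 * (a0*eps + a1*(1-eps)) \<and>
     pCF P False = c0 * (a0*(1-eps) + a1*eps) + M * (a0*eps + a1*(1-eps))"
proof -
  have pm: "pmf P x = ft a0 a1 eps c0 c1 M m x" for x
    unfolding P_def by (rule ft_pmf) (use assms in auto)
  have wpos: "wt a0 a1 eps e u > 0" for e u
    using assms by (auto simp: wt_def)
  have pEU: "pEU P e u = (if u \<le> 1 then wt a0 a1 eps e u else 0)" for e u
    by (simp add: pEU_def pm ft_def algebra_simps)
  have pU: "pU P u = (if u \<le> 1 then wt a0 a1 eps False u + wt a0 a1 eps True u else 0)" for u
    by (simp add: pU_def pm ft_def UNIV_bool algebra_simps)
  have supp: "suppU P = {0,1}"
    using wpos by (auto simp: suppU_def pU add_pos_pos)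
  have cond: "u \<le> 1 \<Longrightarrow> condDEU P e u = rt c0 c1 M m e u" for e u
    using wpos[of e u] by (simp add: condDEU_def pEU pm ft_def)
  have cond': "u \<in> {0,1} \<Longrightarrow> condDEU P e u = rt c0 c1 M m e u" for e u
    using cond by auto
  have S1: "{condDEU P e u | e u. u \<in> suppU P} = {rt c0 c1 M m e u | e u. u \<in> {0::nat,1}}"
    proof (rule set_eqI, rule iffI)
    fix x assume "x \<in> {condDEU P e u | e u. u \<in> suppU P}"
    then obtain e u where h: "x = condDEU P e u" "u \<in> {0::nat,1}" using supp by blast
    then have "x = rt c0 c1 M m e u" using cond' by simp
    with h(2) show "x \<in> {rt c0 c1 M m e u | e u. u \<in> {0::nat,1}}" by blast
  next
    fix x assume "x \<in> {rt c0 c1 M m e u | e u. u \<in> {0::nat,1}}"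
    then obtain e u where h: "x = rt c0 c1 M m e u" "u \<in> {0::nat,1}" by blast
    then have "x = condDEU P e u" using cond' by simp
    with h(2) supp show "x \<in> {condDEU P e u | e u. u \<in> suppU P}" by blast
  qed
  have r: "c0 = rt c0 c1 M m False 0" "M = rt c0 c1 M m False 1"
     "m = rt c0 c1 M m True 0" "c1 = rt c0 c1 M m True 1"
    by (simp_all add: rt_def)
  have S2: "{rt c0 c1 M m e u | e u. u \<in> {0::nat,1}} = {c0, M, m, c1}"
  proof (rule set_eqI, rule iffI)
    fix x assume "x \<in> {rt c0 c1 M m e u | e u. u \<in> {0::nat,1}}"
    then obtain e u where "x = rt c0 c1 M m e u" "u \<in> {0::nat,1}" by blast
    then show "x \<in> {c0, M, m, c1}" by (cases e; cases "u = 0") (auto simp: rt_def)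
  next
    fix x assume "x \<in> {c0, M, m, c1}"
    then show "x \<in> {rt c0 c1 M m e u | e u. u \<in> {0::nat,1}}"
      using r by (elim insertE; simp only: singleton_iff) blast+
  qed
  have S: "{condDEU P e u | e u. u \<in> suppU P} = {c0, M, m, c1}"
    using S1 S2 by simp
  have fin: "finite (set_pmf P)"
  proof (rule finite_subset)
    show "set_pmf P \<subseteq> UNIV \<times> UNIV \<times> {0,1}"
      by (auto simp: set_pmf_eq pm ft_def split: if_splits)
  qed simp
  have pos: "positivity P"
    using wpos by (auto simp: positivity_def pU pEU split: if_splits)
  have Mx: "Msens P = M" unfolding Msens_def S using assms by (simp add: max_def)
  have mn: "msens P = m" unfolding msens_def S using assms by (simp add: min_def)
  have pDE: "pDE P d e = ft a0 a1 eps c0 c1 M m (d,e,0) + ft a0 a1 eps c0 c1 M m (d,e,1)" for d e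
    by (simp add: pDE_def supp pm)
  have cf: "pCF P e = rt c0 c1 M m e 0 * pU P 0 + rt c0 c1 M m e 1 * pU P 1" for e
    by (simp add: pCF_def supp cond)
  show ?thesis using fin pos Mx mn pDE
    by (simp add: cf pU rt_def wt_def algebra_simps)
qed

lemma bnd:
  fixes a x eps del y z :: real
  assumes "0 \<le> a" "a \<le> 1" "\<bar>x\<bar> \<le> 1" "0 < eps" "eps < del" "y - z = a * eps * x"
  shows "\<bar>y - z\<bar> < del"
proof -
  have "\<bar>y - z\<bar> = a * eps * \<bar>x\<bar>" using assms by (simp add: abs_mult)
  also have "\<dots> = eps * (a * \<bar>x\<bar>)" by simp
  also have "\<dots> \<le> eps * 1"
    using assms by (intro mult_left_mono mult_le_one) auto
  also have "\<dots> = eps" by simp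
  finally show ?thesis using assms by simp
qed

theorem theorem1:
  fixes q :: "(bool \<times> bool) pmf" and M' m' \<delta> :: real
  assumes "obsE q True > 0" and "obsE q False > 0"
    and "max (obsCond q True) (obsCond q False) \<le> M'" and "M' \<le> 1"
    and "0 \<le> m'" and "m' \<le> min (obsCond q True) (obsCond q False)"
    and "\<delta> > 0"
  shows "\<exists>p :: (bool \<times> bool \<times> nat) pmf.
           finite (set_pmf p) \<and> positivity p \<and>
           \<bar>Msens p - M'\<bar> < \<delta> \<and> \<bar>msens p - m'\<bar> < \<delta> \<and>
           (\<forall>d e. \<bar>pDE p d e - pmf q (d, e)\<bar> < \<delta>) \<and>
           \<bar>pCF p True - (pDE p True True + pE p False * msens p)\<bar> < \<delta> \<and>
           \<bar>pCF p False - (pDE p True False + pE p True * Msens p)\<bar> < \<delta>"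
proof -
  define a0 where "a0 = obsE q False"
  define a1 where "a1 = obsE q True"
  define c0 where "c0 = obsCond q False"
  define c1 where "c1 = obsCond q True"
  define eps where "eps = min (1/2) (\<delta>/2)"
  have a0p: "a0 > 0" and a1p: "a1 > 0" using assms a0_def a1_def by auto
  have s1: "(\<Sum>x\<in>UNIV. pmf q x) = 1" by (rule sum_pmf_eq_1) auto
  have U: "(UNIV :: (bool \<times> bool) set) = {(True,True),(True,False),(False,True),(False,False)}"
    by auto
  have asum: "a0 + a1 = 1" using s1 unfolding U a0_def a1_def obsE_def by simp
  have qT0: "pmf q (True, False) = a0 * c0" using a0p unfolding a0_def c0_def obsCond_def by simp
  have qT1: "pmf q (True, True) = a1 * c1" using a1p unfolding a1_def c1_def obsCond_def by simp
  have qF0: "pmf q (False, False) = a0 * (1 - c0)"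
    using a0p unfolding a0_def c0_def obsCond_def obsE_def by (simp add: field_simps)
  have qF1: "pmf q (False, True) = a1 * (1 - c1)"
    using a1p unfolding a1_def c1_def obsCond_def obsE_def by (simp add: field_simps)
  have c0b: "0 \<le> c0" "c0 \<le> 1" using a0p unfolding a0_def c0_def obsCond_def obsE_def by (auto simp: divide_le_eq_1)
  have c1b: "0 \<le> c1" "c1 \<le> 1" using a1p unfolding a1_def c1_def obsCond_def obsE_def by (auto simp: divide_le_eq_1)
  have Mb: "c0 \<le> M'" "c1 \<le> M'" "M' \<le> 1" using assms c0_def c1_def by auto
  have mb: "m' \<le> c0" "m' \<le> c1" "0 \<le> m'" using assms c0_def c1_def by auto
  have epsb: "0 < eps" "eps < 1" "eps < \<delta>" using assms eps_def by auto
  have a0b: "a0 \<le> 1" and a1b: "a1 \<le> 1" using asum a0p a1p by auto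
  define P where "P = embed_pmf (ft a0 a1 eps c0 c1 M' m')"
  have C: "finite (set_pmf P) \<and> positivity P \<and> Msens P = M' \<and> msens P = m' \<and>
     (\<forall>d e. pDE P d e = ft a0 a1 eps c0 c1 M' m' (d,e,0) + ft a0 a1 eps c0 c1 M' m' (d,e,1)) \<and>
     pCF P True = m' * (a0*(1-eps) + a1*eps) + c1 * (a0*eps + a1*(1-eps)) \<and>
     pCF P False = c0 * (a0*(1-eps) + a1*eps) + M' * (a0*eps + a1*(1-eps))"
    unfolding P_def
    by (rule construct) (use a0p a1p asum epsb c0b c1b Mb mb in auto)
  have pde: "pDE P d e = ft a0 a1 eps c0 c1 M' m' (d,e,0) + ft a0 a1 eps c0 c1 M' m' (d,e,1)" for d e
    using C by blast
  have pTT: "pDE P True True = a1*eps*m' + a1*(1-eps)*c1"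
    and pTF: "pDE P True False = a0*(1-eps)*c0 + a0*eps*M'"
    and pFT: "pDE P False True = a1*eps*(1-m') + a1*(1-eps)*(1-c1)"
    and pFF: "pDE P False False = a0*(1-eps)*(1-c0) + a0*eps*(1-M')"
    by (simp_all add: pde ft_def wt_def rt_def)
  have pE0: "pE P False = a0" by (simp add: pE_def pTF pFF algebra_simps)
  have pE1: "pE P True = a1" by (simp add: pE_def pTT pFT algebra_simps)
  have D: "\<forall>d e. \<bar>pDE P d e - pmf q (d, e)\<bar> < \<delta>"
  proof (intro allI)
    fix d e show "\<bar>pDE P d e - pmf q (d, e)\<bar> < \<delta>"
    proof (cases d; cases e)
      assume "d" "e" then show ?thesis
        by (intro bnd[of a1 "m' - c1" eps]) (use a1p a1b epsb mb c1b in \<open>auto simp: pTT qT1 algebra_simps\<close>)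
    next
      assume "d" "\<not>e" then show ?thesis
        by (intro bnd[of a0 "M' - c0" eps]) (use a0p a0b epsb Mb c0b in \<open>auto simp: pTF qT0 algebra_simps\<close>)
    next
      assume "\<not>d" "e" then show ?thesis
        by (intro bnd[of a1 "c1 - m'" eps]) (use a1p a1b epsb mb c1b in \<open>auto simp: pFT qF1 algebra_simps\<close>)
    next
      assume "\<not>d" "\<not>e" then show ?thesis
        by (intro bnd[of a0 "c0 - M'" eps]) (use a0p a0b epsb Mb c0b in \<open>auto simp: pFF qF0 algebra_simps\<close>)
    qed
  qed
  have cfT: "pCF P True = m' * (a0*(1-eps) + a1*eps) + c1 * (a0*eps + a1*(1-eps))"
    and cfF: "pCF P False = c0 * (a0*(1-eps) + a1*eps) + M' * (a0*eps + a1*(1-eps))"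
    and mnP: "msens P = m'" and MxP: "Msens P = M'" using C by blast+
  have e1: "pCF P True - (pDE P True True + pE P False * msens P) = a0 * eps * (c1 - m')"
    unfolding cfT pTT pE0 mnP by (simp add: algebra_simps)
  have e0: "pCF P False - (pDE P True False + pE P True * Msens P) = a1 * eps * (c0 - M')"
    unfolding cfF pTF pE1 MxP by (simp add: algebra_simps)
  have CF1: "\<bar>pCF P True - (pDE P True True + pE P False * msens P)\<bar> < \<delta>"
    by (rule bnd[OF _ _ _ _ _ e1]) (use a0p a0b epsb mb c1b in auto)
  have CF0: "\<bar>pCF P False - (pDE P True False + pE P True * Msens P)\<bar> < \<delta>"
    by (rule bnd[OF _ _ _ _ _ e0]) (use a1p a1b epsb Mb c0b in auto)
  show ?thesis
    by (rule exI[of _ P]) (use C D CF1 CF0 assms in auto)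
qed

end
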